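(* Let $t_0<\beta\le+\infty$, $J=[t_0,\beta[$, let $D\subset\mathbb{R}^n$ be an open set, let $m\ge 1$, and let $f\colon J\times D^m\to\mathbb{R}^n$ be continuous. Suppose there is a continuous function $k\colon J\to\mathbb{R}$ such that \[ \|F(t,z)-F(t,z')\|\le k(t)\,\|z-z'\|\qquad (t\in J,\ z,z'\in D^m), \] where $F(t,(z_1,\dots,z_m))=f(t,z_1,\dots,z_m)$. Let $g_1,\dots,g_m\colon J\to\mathbb{R}$ be continuous functions such that, for some real number $\gamma\le t_0$, $\gamma\le g_j(t)\le t$ for all $t\in J$ and all $j=1,\dots,m$. Let $\theta\colon[\gamma,t_0]\to D$ be a continuous initial function. Then for every $\beta_1$ with $t_0<\beta_1\le\beta$, the problem \[ x'(t)=f\big(t,x(g_1(t)),\dots,x(g_m(t))\big)\quad (t\in[t_0,\beta_1[),\qquad x(t)=\theta(t)\quad(t\in[\gamma,t_0]) \] has at most one solution on $[\gamma,\beta_1[$.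
   Context: A solution of the problem on $[\gamma,\beta_1[$ is a continuous function $x\colon[\gamma,\beta_1[\to D$ that is differentiable on $[t_0,\beta_1[$ (one-sided at $t_0$), satisfies $x'(t)=f(t,x(g_1(t)),\dots,x(g_m(t)))$ for all $t\in[t_0,\beta_1[$, and satisfies $x(t)=\theta(t)$ for all $t\in[\gamma,t_0]$. The norm $\|\cdot\|$ on $\mathbb{R}^n$ is a fixed norm, and on $D^m\subset(\mathbb{R}^n)^m$ the norm is $\|(z_1,\dots,z_m)\|=\max_{1\le j\le m}\|z_j\|$. *)

theory Defs
  imports "HOL-Analysis.Analysis"
begin

definition is_norm_fun :: "('a::real_vector \<Rightarrow> real) \<Rightarrow> bool" where
  "is_norm_fun N \<longleftrightarrow>
     (\<forall>x. N x \<ge> 0) \<and> (\<forall>x. N x = 0 \<longleftrightarrow> x = 0) \<and>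
     (\<forall>c x. N (c *\<^sub>R x) = \<bar>c\<bar> * N x) \<and> (\<forall>x y. N (x + y) \<le> N x + N y)"

text \<open>Max-norm on D^m induced by N; the index set of the m delays is a finite type 'm.\<close>
definition max_norm :: "('a \<Rightarrow> real) \<Rightarrow> ('m::finite \<Rightarrow> 'a) \<Rightarrow> real" where
  "max_norm N z = Max (range (\<lambda>j. N (z j)))"

definition ico_e :: "real \<Rightarrow> ereal \<Rightarrow> real set" where
  "ico_e a b = {t. a \<le> t \<and> ereal t < b}"

definition is_solution ::
  "(real \<Rightarrow> ('m::finite \<Rightarrow> 'a::real_normed_vector) \<Rightarrow> 'a) \<Rightarrow> ('m \<Rightarrow> real \<Rightarrow> real) \<Rightarrow>
   (real \<Rightarrow> 'a) \<Rightarrow> 'a set \<Rightarrow> real \<Rightarrow> real \<Rightarrow> ereal \<Rightarrow> (real \<Rightarrow> 'a) \<Rightarrow> bool" where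
  "is_solution f g \<theta> D \<gamma> t0 \<beta>1 x \<longleftrightarrow>
     continuous_on ({\<gamma>..t0} \<union> ico_e t0 \<beta>1) x \<and>
     (\<forall>t \<in> {\<gamma>..t0} \<union> ico_e t0 \<beta>1. x t \<in> D) \<and>
     (\<forall>t \<in> ico_e t0 \<beta>1.
        (x has_vector_derivative f t (\<lambda>j. x (g j t))) (at t within ico_e t0 \<beta>1)) \<and>
     (\<forall>t \<in> {\<gamma>..t0}. x t = \<theta> t)"

end

theory Submission
  imports Defs
begin

lemma nf_props:
  assumes "is_norm_fun N"
  shows "\<And>x. N x \<ge> 0" "\<And>x. N x = 0 \<longleftrightarrow> x = 0" "\<And>c x. N (c *\<^sub>R x) = \<bar>c\<bar> * N x"
    "\<And>x y. N (x + y) \<le> N x + N y"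
  using assms unfolding is_norm_fun_def by auto

lemma nf_zero: assumes "is_norm_fun N" shows "N 0 = 0"
  using nf_props[OF assms] by simp

lemma nf_minus: assumes "is_norm_fun N" shows "N (x - y) = N (y - x)"
proof -
  have "N (x - y) = N ((-1) *\<^sub>R (y - x))" by simp
  also have "\<dots> = N (y - x)" using nf_props(3)[OF assms, of "-1" "y - x"] by simp
  finally show ?thesis .
qed

lemma nf_sum: assumes "is_norm_fun N" and "finite A"
  shows "N (sum f A) \<le> (\<Sum>a\<in>A. N (f a))"
  using assms(2)
proof (induction A rule: finite_induct)
  case empty then show ?case using nf_zero[OF assms(1)] by simp
next
  case (insert a F)
  have "N (sum f (insert a F)) = N (f a + sum f F)" using insert by simp
  also have "\<dots> \<le> N (f a) + N (sum f F)" using nf_props(4)[OF assms(1)] by blast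
  also have "\<dots> \<le> N (f a) + (\<Sum>a\<in>F. N (f a))" using insert by simp
  finally show ?case using insert by simp
qed

lemma nf_upper:
  fixes N :: "'a::euclidean_space \<Rightarrow> real"
  assumes "is_norm_fun N"
  shows "\<exists>c2>0. \<forall>v. N v \<le> c2 * norm v"
proof (intro exI[of _ "(\<Sum>b\<in>Basis. N b) + 1"] conjI allI)
  have s0: "(\<Sum>b\<in>Basis. N b) \<ge> 0" using nf_props(1)[OF assms] by (simp add: sum_nonneg)
  then show "(\<Sum>b\<in>Basis. N b) + 1 > 0" by simp
  fix v :: 'a
  have "N v = N (\<Sum>b\<in>Basis. (v \<bullet> b) *\<^sub>R b)" by (simp add: euclidean_representation)
  also have "\<dots> \<le> (\<Sum>b\<in>Basis. N ((v \<bullet> b) *\<^sub>R b))" by (rule nf_sum[OF assms]) simp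
  also have "\<dots> = (\<Sum>b\<in>Basis. \<bar>v \<bullet> b\<bar> * N b)" using nf_props(3)[OF assms] by simp
  also have "\<dots> \<le> (\<Sum>b\<in>Basis. norm v * N b)"
    by (rule sum_mono, rule mult_right_mono) (auto simp: Basis_le_norm nf_props(1)[OF assms])
  also have "\<dots> = norm v * (\<Sum>b\<in>Basis. N b)" by (simp add: sum_distrib_left)
  also have "\<dots> \<le> ((\<Sum>b\<in>Basis. N b) + 1) * norm v" by (simp add: algebra_simps)
  finally show "N v \<le> ((\<Sum>b\<in>Basis. N b) + 1) * norm v" .
qed

lemma nf_lower:
  fixes N :: "'a::euclidean_space \<Rightarrow> real"
  assumes "is_norm_fun N"
  shows "\<exists>c1>0. \<forall>v. c1 * norm v \<le> N v"
proof -
  obtain c2 where c2: "c2 > 0" "\<forall>v. N v \<le> c2 * norm v" using nf_upper[OF assms] by blast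
  have lip: "\<bar>N x - N y\<bar> \<le> c2 * norm (x - y)" for x y
  proof -
    have "N x \<le> N (x - y) + N y" using nf_props(4)[OF assms, of "x - y" y] by simp
    moreover have "N y \<le> N (y - x) + N x" using nf_props(4)[OF assms, of "y - x" x] by simp
    moreover have "N (y - x) = N (x - y)" using nf_minus[OF assms] by simp
    ultimately show ?thesis using c2(2)[rule_format, of "x - y"] by linarith
  qed
  have cont: "continuous_on (sphere 0 1) N"
    unfolding continuous_on_iff
  proof (intro ballI allI impI)
    fix x e assume "(e::real) > 0"
    show "\<exists>d>0. \<forall>x'\<in>sphere 0 1. dist x' x < d \<longrightarrow> dist (N x') (N x) < e"
    proof (intro exI[of _ "e / c2"] conjI ballI impI)
      show "e / c2 > 0" using \<open>e > 0\<close> c2 by simp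
      fix x' assume "dist x' x < e / c2"
      then have "c2 * norm (x' - x) < e" using c2(1) by (simp add: dist_norm field_simps)
      then show "dist (N x') (N x) < e" using lip[of x' x] by (simp add: dist_real_def)
    qed
  qed
  obtain b :: 'a where b: "b \<in> Basis" using nonempty_Basis by blast
  have "b \<in> sphere 0 1" using b by simp
  then have ne: "sphere (0::'a) 1 \<noteq> {}" by blast
  obtain v0 where v0: "v0 \<in> sphere 0 1" "\<forall>y\<in>sphere 0 1. N v0 \<le> N y"
    using continuous_attains_inf[OF compact_sphere ne cont] by blast
  have "v0 \<noteq> 0" using v0(1) by auto
  then have pos: "N v0 > 0" using nf_props(1,2)[OF assms, of v0] by linarith
  show ?thesis
  proof (intro exI[of _ "N v0"] conjI allI pos)
    fix v :: 'a
    show "N v0 * norm v \<le> N v"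
    proof (cases "v = 0")
      case True then show ?thesis using nf_zero[OF assms] by simp
    next
      case False
      then have "v /\<^sub>R norm v \<in> sphere 0 1" by simp
      then have "N v0 \<le> N (v /\<^sub>R norm v)" using v0(2) by blast
      also have "\<dots> = N v / norm v" using nf_props(3)[OF assms] by (simp add: divide_inverse_commute)
      finally show ?thesis using False by (simp add: field_simps)
    qed
  qed
qed

lemma max_norm_ge: "N (z j) \<le> max_norm N z"
  unfolding max_norm_def by (rule Max_ge) auto

lemma max_norm_le: "(\<And>j. N (z j) \<le> B) \<Longrightarrow> max_norm N z \<le> B"
  unfolding max_norm_def by (subst Max_le_iff) auto

theorem mainTheorem1:
  fixes f :: "real \<Rightarrow> ('m::finite \<Rightarrow> 'a::euclidean_space) \<Rightarrow> 'a"
    and N :: "'a \<Rightarrow> real"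
    and k :: "real \<Rightarrow> real"
    and g :: "'m \<Rightarrow> real \<Rightarrow> real"
    and \<theta> :: "real \<Rightarrow> 'a"
    and D :: "'a set"
    and t0 \<gamma> :: real
    and \<beta> \<beta>1 :: ereal
  assumes "is_norm_fun N"
    and "ereal t0 < \<beta>"
    and "open D"
    and "continuous_on (ico_e t0 \<beta> \<times> {z. \<forall>j. z j \<in> D}) (\<lambda>(t, z). f t z)"
    and "continuous_on (ico_e t0 \<beta>) k"
    and "\<And>t z z'. t \<in> ico_e t0 \<beta> \<Longrightarrow> (\<forall>j. z j \<in> D) \<Longrightarrow> (\<forall>j. z' j \<in> D) \<Longrightarrow>
           N (f t z - f t z') \<le> k t * max_norm N (\<lambda>j. z j - z' j)"
    and "\<And>j. continuous_on (ico_e t0 \<beta>) (g j)"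
    and "\<gamma> \<le> t0"
    and "\<And>j t. t \<in> ico_e t0 \<beta> \<Longrightarrow> \<gamma> \<le> g j t \<and> g j t \<le> t"
    and "continuous_on {\<gamma>..t0} \<theta>"
    and "\<theta> ` {\<gamma>..t0} \<subseteq> D"
    and "ereal t0 < \<beta>1" and "\<beta>1 \<le> \<beta>"
    and "is_solution f g \<theta> D \<gamma> t0 \<beta>1 x"
    and "is_solution f g \<theta> D \<gamma> t0 \<beta>1 y"
  shows "\<forall>t \<in> {\<gamma>..t0} \<union> ico_e t0 \<beta>1. x t = y t"
proof -
  obtain c1 where c1: "c1 > 0" "\<forall>v. c1 * norm v \<le> N v" using nf_lower[OF assms(1)] by blast
  obtain c2 where c2: "c2 > 0" "\<forall>v. N v \<le> c2 * norm v" using nf_upper[OF assms(1)] by blast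
  define w where "w t = x t - y t" for t
  define S where "S = {\<gamma>..t0} \<union> ico_e t0 \<beta>1"
  note sx = assms(14)[unfolded is_solution_def, folded S_def]
  note sy = assms(15)[unfolded is_solution_def, folded S_def]
  have w0: "w t = 0" if "t \<in> {\<gamma>..t0}" for t using sx sy that by (simp add: w_def)
  have wc: "continuous_on S w" unfolding w_def using sx sy by (intro continuous_on_diff) auto
  have icosub: "ico_e t0 \<beta>1 \<subseteq> ico_e t0 \<beta>" using assms(13) unfolding ico_e_def by auto
  have gS: "g j t \<in> S" if "t \<in> ico_e t0 \<beta>1" for j t
  proof -
    have "t \<in> ico_e t0 \<beta>" using that icosub by blast
    from assms(9)[OF this, of j] have "\<gamma> \<le> g j t" "g j t \<le> t" by auto
    moreover have "ereal t < \<beta>1" using that unfolding ico_e_def by auto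
    ultimately show ?thesis unfolding S_def ico_e_def
      by (cases "g j t \<le> t0") (auto intro: le_less_trans[of "ereal (g j t)" "ereal t"])
  qed
  define w' where "w' t = f t (\<lambda>j. x (g j t)) - f t (\<lambda>j. y (g j t))" for t
  have wd: "(w has_vector_derivative w' t) (at t within ico_e t0 \<beta>1)" if "t \<in> ico_e t0 \<beta>1" for t
    unfolding w_def w'_def using sx sy that by (intro has_vector_derivative_diff) auto
  show ?thesis
  proof (rule ballI, rule ccontr)
    fix t1 assume t1S: "t1 \<in> {\<gamma>..t0} \<union> ico_e t0 \<beta>1" and ne: "x t1 \<noteq> y t1"
    have t1: "t1 \<in> ico_e t0 \<beta>1" "t0 < t1"
    proof -
      show "t1 \<in> ico_e t0 \<beta>1" using t1S ne w0 w_def by auto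
      then show "t0 < t1" using ne w0[of t1] assms(8) unfolding w_def ico_e_def
        by (cases "t1 = t0") auto
    qed
    have ccsub: "{t0..t1} \<subseteq> ico_e t0 \<beta>1" using t1(1) unfolding ico_e_def
      by (auto intro: le_less_trans[of "ereal _" "ereal t1"])
    have "compact (k ` {t0..t1})"
      by (rule compact_continuous_image[OF continuous_on_subset[OF assms(5)]]) (use ccsub icosub in auto)
    then obtain K where K: "\<forall>t\<in>{t0..t1}. \<bar>k t\<bar> \<le> K"
      using compact_imp_bounded[of "k ` {t0..t1}"] unfolding bounded_iff by auto
    define L where "L = max K 0 * c2 / c1"
    have L0: "L \<ge> 0" unfolding L_def using c1 c2 by simp
    have dbound: "norm (w' u) \<le> L * B" if u: "u \<in> {t0..t1}" and B: "\<And>j. norm (w (g j u)) \<le> B" for u B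
    proof -
      have uI: "u \<in> ico_e t0 \<beta>1" using u ccsub by blast
      have B0: "B \<ge> 0" using B[of undefined] norm_ge_zero order_trans by blast
      have xD: "\<forall>j. x (g j u) \<in> D" "\<forall>j. y (g j u) \<in> D" using sx sy gS[OF uI] by auto
      have mn: "max_norm N (\<lambda>j. x (g j u) - y (g j u)) \<le> c2 * B"
        by (rule max_norm_le) (use c2 B c1 in \<open>auto simp: w_def intro: order_trans mult_left_mono\<close>)
      have mn0: "max_norm N (\<lambda>j. x (g j u) - y (g j u)) \<ge> 0"
        using max_norm_ge[of N _ undefined] nf_props(1)[OF assms(1)] order_trans by blast
      have "c1 * norm (w' u) \<le> N (w' u)" using c1 by blast
      also have "\<dots> \<le> k u * max_norm N (\<lambda>j. x (g j u) - y (g j u))"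
        unfolding w'_def using assms(6)[OF _ xD] uI icosub by blast
      also have "\<dots> \<le> max K 0 * max_norm N (\<lambda>j. x (g j u) - y (g j u))"
        using K[rule_format, of u] u mn0 by (intro mult_right_mono) auto
      also have "\<dots> \<le> max K 0 * (c2 * B)" using mn by (intro mult_left_mono) auto
      finally have "c1 * norm (w' u) \<le> max K 0 * (c2 * B)" .
      then show ?thesis using c1 unfolding L_def by (simp add: field_simps)
    qed
    define A where "A = {s \<in> {t0..t1}. \<forall>u\<in>{t0..s}. w u = 0}"
    have t0A: "t0 \<in> A" unfolding A_def using t1 w0 assms(8) by auto
    have bdd: "bdd_above A" unfolding A_def by (rule bdd_aboveI[of _ t1]) auto
    define s where "s = Sup A"
    have s_ge: "t0 \<le> s" unfolding s_def using cSup_upper[OF t0A bdd] .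
    have s_le: "s \<le> t1" unfolding s_def using t0A by (intro cSup_least) (auto simp: A_def)
    have below: "w u = 0" if us: "t0 \<le> u" "u < s" for u
    proof -
      obtain a where "a \<in> A" "u < a" using less_cSupD[of A u] t0A us unfolding s_def by blast
      then show ?thesis using us unfolding A_def by auto
    qed
    have ws: "w s = 0"
    proof (rule ccontr)
      assume nz: "w s \<noteq> 0"
      have "s \<noteq> t0" using nz w0[of t0] assms(8) by auto
      then have st: "t0 < s" using s_ge by simp
      have sS: "s \<in> S" using ccsub s_ge s_le unfolding S_def by auto
      obtain d where d: "d > 0" "\<forall>x'\<in>S. dist x' s < d \<longrightarrow> dist (w x') (w s) < norm (w s)"
        using wc sS nz unfolding continuous_on_iff by (meson zero_less_norm_iff)
      define u where "u = max t0 (s - d/2)"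
      have "u \<in> {t0..t1}" using s_le st d unfolding u_def by auto
      then have uS: "u \<in> S" using ccsub unfolding S_def by blast
      have "dist u s < d" using st d unfolding u_def dist_real_def by auto
      moreover have "w u = 0" using st d by (intro below) (auto simp: u_def)
      ultimately show False using d uS by (auto simp: dist_norm)
    qed
    have zero_upto: "w u = 0" if "t0 \<le> u" "u \<le> s" for u
      using below ws that by (cases "u = s") auto
    have s_lt: "s < t1"
    proof (rule ccontr)
      assume "\<not> s < t1"
      then have "s = t1" using s_le by simp
      then have "w t1 = 0" using zero_upto[of t1] t1 by simp
      then show False using ne by (simp add: w_def)
    qed
    define h where "h = min (t1 - s) (1 / (L + 1))"
    have h0: "h > 0" using s_lt L0 unfolding h_def by simp
    have hle: "s + h \<le> t1" unfolding h_def by simp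
    have Lh: "L * h < 1"
    proof -
      have "L * h \<le> L * (1 / (L + 1))" using L0 unfolding h_def by (intro mult_left_mono) auto
      also have "\<dots> < 1" using L0 by (simp add: field_simps)
      finally show ?thesis .
    qed
    define I where "I = {s..s+h}"
    have IS2: "I \<subseteq> {t0..t1}" using s_ge hle unfolding I_def by auto
    have IS: "I \<subseteq> ico_e t0 \<beta>1" using ccsub IS2 by blast
    have Ine: "I \<noteq> {}" using h0 unfolding I_def by simp
    have wcI: "continuous_on I (\<lambda>u. norm (w u))"
      by (intro continuous_on_norm continuous_on_subset[OF wc]) (use IS in \<open>auto simp: S_def\<close>)
    obtain u0 where u0: "u0 \<in> I" "\<forall>u\<in>I. norm (w u) \<le> norm (w u0)"
      using continuous_attains_sup[OF _ Ine wcI] unfolding I_def by auto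
    define M where "M = norm (w u0)"
    have gb: "norm (w (g j u)) \<le> M" if "u \<in> I" for u j
    proof -
      have uI: "u \<in> ico_e t0 \<beta>" using that IS icosub by blast
      from assms(9)[OF uI, of j] have g: "\<gamma> \<le> g j u" "g j u \<le> u" by auto
      have M0: "M \<ge> 0" unfolding M_def by simp
      show ?thesis
      proof (cases "g j u \<le> t0")
        case True then show ?thesis using w0 g M0 by simp
      next
        case False
        show ?thesis
        proof (cases "g j u \<le> s")
          case True then show ?thesis using zero_upto[of "g j u"] False M0 by simp
        next
          case F2: False
          then have "g j u \<in> I" using g that unfolding I_def by auto
          then show ?thesis using u0 unfolding M_def by blast
        qed
      qed
    qed
    have mv: "norm (w u - w s) \<le> (L * M) * norm (u - s)" if "u \<in> I" for u
    proof (rule differentiable_bound[where f' = "\<lambda>u h. h *\<^sub>R w' u" and S = I])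
      show "convex I" unfolding I_def by simp
      show "u \<in> I" by fact
      show "s \<in> I" using h0 unfolding I_def by simp
      fix v assume vI: "v \<in> I"
      have "(w has_vector_derivative w' v) (at v within I)"
        by (rule has_vector_derivative_within_subset[OF wd IS]) (use vI IS in auto)
      then show "(w has_derivative (\<lambda>h. h *\<^sub>R w' v)) (at v within I)"
        unfolding has_vector_derivative_def .
      have nb: "norm (w' v) \<le> L * M" using dbound[of v M] vI IS2 gb by blast
      show "onorm (\<lambda>h. h *\<^sub>R w' v) \<le> L * M"
      proof (rule onorm_le)
        fix r :: real
        have "norm (r *\<^sub>R w' v) = \<bar>r\<bar> * norm (w' v)" by simp
        also have "\<dots> \<le> \<bar>r\<bar> * (L * M)" using nb by (intro mult_left_mono) auto
        finally show "norm (r *\<^sub>R w' v) \<le> L * M * norm r" by (simp add: mult.commute)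
      qed
    qed
    have "M \<le> (L * M) * norm (u0 - s)" using mv[OF u0(1)] ws unfolding M_def by simp
    also have "\<dots> \<le> (L * M) * h" using u0(1) L0 unfolding I_def M_def
      by (intro mult_left_mono) auto
    finally have "M \<le> (L * h) * M" by (simp add: algebra_simps)
    then have "(1 - L * h) * M \<le> 0" by (simp add: algebra_simps)
    then have "M \<le> 0" using Lh by (simp add: mult_le_0_iff)
    moreover have "M \<ge> 0" unfolding M_def by simp
    ultimately have M0: "M = 0" by simp
    have "s + h \<in> A" unfolding A_def
    proof (intro CollectI conjI ballI)
      show "s + h \<in> {t0..t1}" using s_ge hle h0 by auto
      fix u assume u: "u \<in> {t0..s+h}"
      show "w u = 0"
      proof (cases "u \<le> s")
        case True then show ?thesis using zero_upto u by auto
      next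
        case False
        then have "u \<in> I" using u unfolding I_def by auto
        then show ?thesis using u0 M0 unfolding M_def by auto
      qed
    qed
    then have "s + h \<le> s" unfolding s_def using cSup_upper[OF _ bdd] by blast
    then show False using h0 by simp
  qed
qed

end
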